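(* Fix $\epsilon\in(0,\pi)$ and choose $\delta\in(0,1)$ such that $\frac{-2\delta^2-2\delta+4}{\delta^2+10\delta+4}\ge\cos\epsilon$. Then for any $x=(x_1,\dots,x_6)\in\mathbb{R}^6_{>1}$ with $\max_{2\le i\le6}x_i\le2$ and $x_1=1+\delta$, $$\phi(x)\ge\frac{-2\delta^2-2\delta+4}{\delta^2+10\delta+4}\ge\cos\epsilon,$$ so in particular the angle $\alpha=\arccos(\max\{-1,\min\{\phi(x),1\}\})$ satisfies $\cos\alpha\ge\cos\epsilon$.
   Context: For $x=(x_1,\dots,x_6)\in\mathbb{R}^6_{\ge1}$ define $$\phi(x)=\frac{x_2x_3+x_5x_6+x_1x_2x_5+x_1x_3x_6-x_1^2x_4+x_4}{\sqrt{2x_1x_2x_6+x_1^2+x_2^2+x_6^2-1}\sqrt{2x_1x_3x_5+x_1^2+x_3^2+x_5^2-1}}.$$ (This is the cosine of the extended dihedral angle at edge $e_1$ of a generalized hyper-ideal tetrahedron whose edges have cosh-lengths $x_1,\dots,x_6$, with $e_{i+3}$ opposite $e_i$.) *)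

theory Defs
  imports "HOL-Analysis.Analysis"
begin

text \<open>Cosine of the extended dihedral angle at edge e1 of a generalized hyper-ideal
tetrahedron with edge cosh-lengths x1..x6 (e(i+3) opposite e(i)).\<close>
definition phi :: "real \<Rightarrow> real \<Rightarrow> real \<Rightarrow> real \<Rightarrow> real \<Rightarrow> real \<Rightarrow> real" where
  "phi x1 x2 x3 x4 x5 x6 =
     (x2*x3 + x5*x6 + x1*x2*x5 + x1*x3*x6 - x1^2*x4 + x4) /
     (sqrt (2*x1*x2*x6 + x1^2 + x2^2 + x6^2 - 1) *
      sqrt (2*x1*x3*x5 + x1^2 + x3^2 + x5^2 - 1))"

end

theory Submission
  imports Defs
begin

lemma key:
  fixes a x5 x6 :: real
  assumes "a > 1" "a < 2" "x5 \<ge> 1" "x6 \<ge> 1" "x5 \<le> 2" "x6 \<le> 2"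
  shows "3*((1+a*x6)*(1+a*x5)) \<ge> (1+a)^2*(x5*x6+2)"
proof -
  have aa: "a^2 > a" using assms by (simp add: power2_eq_square)
  have p: "3*a+(2*a^2-2*a-1)*x6 \<ge> 0"
  proof (cases "2*a^2-2*a-1 \<ge> 0")
    case True then show ?thesis using assms by simp
  next
    case False
    then have "(2*a^2-2*a-1)*x6 \<ge> (2*a^2-2*a-1)*2" using assms by (intro mult_left_mono_neg) auto
    moreover have "3*a + (2*a^2-2*a-1)*2 > 0" using aa assms by (simp add: algebra_simps)
    ultimately show ?thesis by linarith
  qed
  have q: "2*a^2+a-1 \<ge> 0" using aa assms by linarith
  have eq: "3*((1+a*x6)*(1+a*x5)) - (1+a)^2*(x5*x6+2) = (x5-1)*(3*a+(2*a^2-2*a-1)*x6) + (2*a^2+a-1)*(x6-1)"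
    by (simp add: algebra_simps power2_eq_square)
  have "(x5-1)*(3*a+(2*a^2-2*a-1)*x6) \<ge> 0" using p assms by simp
  moreover have "(2*a^2+a-1)*(x6-1) \<ge> 0" using q assms by simp
  ultimately show ?thesis using eq by linarith
qed

theorem lemma3p3:
  fixes eps delta x1 x2 x3 x4 x5 x6 :: real
  assumes "0 < eps" "eps < pi"
    and "0 < delta" "delta < 1"
    and "(-2*delta^2 - 2*delta + 4) / (delta^2 + 10*delta + 4) \<ge> cos eps"
    and "x1 > 1" "x2 > 1" "x3 > 1" "x4 > 1" "x5 > 1" "x6 > 1"
    and "x2 \<le> 2" "x3 \<le> 2" "x4 \<le> 2" "x5 \<le> 2" "x6 \<le> 2"
    and "x1 = 1 + delta"
  shows "phi x1 x2 x3 x4 x5 x6 \<ge> (-2*delta^2 - 2*delta + 4) / (delta^2 + 10*delta + 4)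
    \<and> (-2*delta^2 - 2*delta + 4) / (delta^2 + 10*delta + 4) \<ge> cos eps
    \<and> cos (arccos (max (-1) (min (phi x1 x2 x3 x4 x5 x6) 1))) \<ge> cos eps"
proof -
  define d where "d = delta"
  define N where "N = x2*x3 + x5*x6 + x1*x2*x5 + x1*x3*x6 - x1^2*x4 + x4"
  define A where "A = 2*x1*x2*x6 + x1^2 + x2^2 + x6^2 - 1"
  define B where "B = 2*x1*x3*x5 + x1^2 + x3^2 + x5^2 - 1"
  define D where "D = (x2+x1*x6)*(x3+x1*x5)"
  define c where "c = (-2*delta^2 - 2*delta + 4) / (delta^2 + 10*delta + 4)"
  have x1lt: "x1 < 2" using assms by simp
  have sq1: "x1^2 > 1" "x2^2 > 1" "x3^2 > 1" "x5^2 > 1" "x6^2 > 1"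
    using assms by (simp_all add: one_less_power)
  have p1: "x1*x2*x6 > 0" "x1*x3*x5 > 0" using assms by simp_all
  have Apos: "A > 0" unfolding A_def using p1 sq1 by linarith
  have Bpos: "B > 0" unfolding B_def using p1 sq1 by linarith
  have Aeq: "A = (x2+x1*x6)^2 - (x1^2-1)*(x6^2-1)" unfolding A_def by (simp add: algebra_simps power2_eq_square)
  have Beq: "B = (x3+x1*x5)^2 - (x1^2-1)*(x5^2-1)" unfolding B_def by (simp add: algebra_simps power2_eq_square)
  have "(x1^2-1)*(x6^2-1) \<ge> 0" using sq1 by simp
  then have "A \<le> (x2+x1*x6)^2" using Aeq by linarith
  then have sA: "sqrt A \<le> x2+x1*x6"
    using assms by (metis real_sqrt_le_mono real_sqrt_abs abs_of_nonneg add_nonneg_nonneg mult_nonneg_nonneg order.strict_implies_order zero_less_one less_trans)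
  have "(x1^2-1)*(x5^2-1) \<ge> 0" using sq1 by simp
  then have "B \<le> (x3+x1*x5)^2" using Beq by linarith
  then have sB: "sqrt B \<le> x3+x1*x5"
    using assms by (metis real_sqrt_le_mono real_sqrt_abs abs_of_nonneg add_nonneg_nonneg mult_nonneg_nonneg order.strict_implies_order zero_less_one less_trans)
  have Spos: "sqrt A * sqrt B > 0" using Apos Bpos by simp
  have SD: "sqrt A * sqrt B \<le> D" unfolding D_def
    by (rule mult_mono[OF sA sB]) (use Bpos assms in \<open>auto intro!: add_nonneg_nonneg mult_nonneg_nonneg\<close>)
  have Neq: "N = D - (x1^2-1)*(x5*x6+x4)" unfolding N_def D_def by (simp add: algebra_simps power2_eq_square)
  have k: "3*((1+x1*x6)*(1+x1*x5)) \<ge> (1+x1)^2*(x5*x6+2)"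
    by (rule key) (use assms x1lt in auto)
  have D1: "D \<ge> (1+x1*x6)*(1+x1*x5)" unfolding D_def
    by (rule mult_mono) (use assms in auto)
  have E1: "(x1^2-1)*(x5*x6+x4) \<le> (x1^2-1)*(x5*x6+2)"
    using sq1 assms by (intro mult_left_mono) auto
  have "(x1+1)*((x1^2-1)*(x5*x6+x4)) \<le> (x1+1)*((x1^2-1)*(x5*x6+2))"
    using E1 assms by (intro mult_left_mono) auto
  also have "\<dots> = (x1-1)*((1+x1)^2*(x5*x6+2))" by (simp add: algebra_simps power2_eq_square)
  also have "\<dots> \<le> (x1-1)*(3*((1+x1*x6)*(1+x1*x5)))" using k assms by (intro mult_left_mono) auto
  also have "\<dots> \<le> (x1-1)*(3*D)" using D1 assms by (intro mult_left_mono) auto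
  finally have E2: "(x1+1)*((x1^2-1)*(x5*x6+x4)) \<le> (x1-1)*(3*D)" .
  have N2: "(2+d)*N \<ge> (2-2*d)*D"
    using E2 unfolding Neq d_def using assms by (simp add: algebra_simps)
  have den: "delta^2 + 10*delta + 4 > 0" using assms by (simp add: add_pos_pos)
  have cnum: "-2*delta^2 - 2*delta + 4 = 2*(1-d)*(2+d)" unfolding d_def by (simp add: algebra_simps power2_eq_square)
  have "c*(2+d) = 2*(1-d)*((2+d)*(2+d)) / (delta^2 + 10*delta + 4)"
    unfolding c_def cnum by (simp add: algebra_simps)
  also have "\<dots> \<le> 2*(1-d)" 
  proof -
    have "(2+d)*(2+d) \<le> delta^2 + 10*delta + 4" using assms unfolding d_def by (simp add: algebra_simps power2_eq_square)
    then have "2*(1-d)*((2+d)*(2+d)) \<le> 2*(1-d)*(delta^2 + 10*delta + 4)"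
      using assms unfolding d_def by (intro mult_left_mono) auto
    then show ?thesis using den by (simp add: divide_le_eq)
  qed
  finally have c2: "c*(2+d) \<le> 2-2*d" by simp
  have cpos: "c > 0" unfolding c_def cnum using den assms d_def by (intro divide_pos_pos mult_pos_pos) auto
  have Dpos: "D > 0" using SD Spos by linarith
  have "(2+d)*(c*D) = (c*(2+d))*D" by simp
  also have "\<dots> \<le> (2-2*d)*D" using c2 Dpos by (intro mult_right_mono) auto
  also have "\<dots> \<le> (2+d)*N" using N2 .
  finally have "(2+d)*(c*D) \<le> (2+d)*N" .
  then have cD: "c*D \<le> N" using assms d_def by (simp add: mult_le_cancel_left)
  have "c*(sqrt A * sqrt B) \<le> c*D" using SD cpos by (intro mult_left_mono) auto
  then have "c*(sqrt A * sqrt B) \<le> N" using cD by linarith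
  then have P: "c \<le> N / (sqrt A * sqrt B)" using Spos by (simp add: pos_le_divide_eq)
  have phieq: "phi x1 x2 x3 x4 x5 x6 = N / (sqrt A * sqrt B)"
    unfolding phi_def N_def A_def B_def by simp
  have dd: "delta*delta > 0" using assms by simp
  have lt: "-2*delta^2 - 2*delta + 4 < delta^2 + 10*delta + 4" using dd assms unfolding power2_eq_square by linarith
  have c1: "c < 1" unfolding c_def using lt den by (simp add: divide_less_eq)
  have clamp: "-1 \<le> max (-1) (min (phi x1 x2 x3 x4 x5 x6) 1)" "max (-1) (min (phi x1 x2 x3 x4 x5 x6) 1) \<le> 1"
    by auto
  have "cos (arccos (max (-1) (min (phi x1 x2 x3 x4 x5 x6) 1))) = max (-1) (min (phi x1 x2 x3 x4 x5 x6) 1)"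
    using clamp by (simp add: cos_arccos)
  moreover have "max (-1) (min (phi x1 x2 x3 x4 x5 x6) 1) \<ge> c" using P phieq c1 by auto
  ultimately show ?thesis using P phieq assms(5) unfolding c_def by auto
qed

end
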